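(* Let $G=(V,E)$ be a connected graph, let $\mathcal{B}$ be the set of blocks of $G$ which are not cut edges of pendant paths of $G$, and let $\mu(v)$ denote the number of blocks containing the vertex $v$. Then $$Z_c(G)\geq\sum_{B\in\mathcal{B}}\delta(G[B])-\sum_{p\in R_2\cup R_3}(\mu(p)-1),$$ where $R_2=\{v\in V:\kappa(G-v)=2,\ p(v)=0\}$ and $R_3=\{v\in V:\kappa(G-v)\geq 3\}$.
   Context: A block is a maximal subgraph with no articulation point. $\kappa(H)$ is the number of connected components of $H$; $\delta(H)$ is the minimum degree of $H$. A pendant path attached to a vertex $v$ is a set $P\subset V$ such that $G[P]$ is a path component of $G-v$, one of whose ends is adjacent to $v$ in $G$; $p(v)$ is the number of pendant paths attached to $v$; a cut edge of a pendant path is an edge of the path $G[P\cup\{v\}]$. Zero forcing: given a set $S$ of initially colored vertices, if a colored vertex $u$ has exactly one uncolored neighbor $w$, then $w$ becomes colored; $S$ is a zero forcing set if repeated application colors all vertices. $Z_c(G)$ is the minimum size of a zero forcing set $S$ with $G[S]$ connected. *)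

theory Defs
  imports Main
begin

definition simple_graph :: "'a set \<Rightarrow> 'a set set \<Rightarrow> bool" where
  "simple_graph V E \<longleftrightarrow> finite V \<and>
     (\<forall>e\<in>E. \<exists>u v. u \<in> V \<and> v \<in> V \<and> u \<noteq> v \<and> e = {u, v})"

definition adj :: "'a set set \<Rightarrow> 'a \<Rightarrow> 'a \<Rightarrow> bool" where
  "adj E u v \<longleftrightarrow> u \<noteq> v \<and> {u, v} \<in> E"

definition ind :: "'a set set \<Rightarrow> 'a set \<Rightarrow> 'a set set" where
  "ind E S = {e \<in> E. e \<subseteq> S}"

definition del_edges :: "'a set set \<Rightarrow> 'a \<Rightarrow> 'a set set" where
  "del_edges E v = {e \<in> E. v \<notin> e}"

definition reach :: "'a set \<Rightarrow> 'a set set \<Rightarrow> 'a \<Rightarrow> 'a \<Rightarrow> bool" where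
  "reach V E = (\<lambda>x y. x \<in> V \<and> y \<in> V \<and> adj E x y)\<^sup>*\<^sup>*"

definition connected_graph :: "'a set \<Rightarrow> 'a set set \<Rightarrow> bool" where
  "connected_graph V E \<longleftrightarrow> V \<noteq> {} \<and> (\<forall>u\<in>V. \<forall>v\<in>V. reach V E u v)"

definition components :: "'a set \<Rightarrow> 'a set set \<Rightarrow> 'a set set" where
  "components V E = (\<lambda>v. {w \<in> V. reach V E v w}) ` V"

definition kappa :: "'a set \<Rightarrow> 'a set set \<Rightarrow> nat" where
  "kappa V E = card (components V E)"

definition articulation_point :: "'a set \<Rightarrow> 'a set set \<Rightarrow> 'a \<Rightarrow> bool" where
  "articulation_point V E v \<longleftrightarrow> v \<in> V \<and> kappa (V - {v}) (del_edges E v) > kappa V E"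

text \<open>Blocks, identified with their vertex sets (a maximal subgraph without articulation
  point is necessarily induced): maximal connected induced subgraphs without articulation point.\<close>
definition nonseparable :: "'a set \<Rightarrow> 'a set set \<Rightarrow> 'a set \<Rightarrow> bool" where
  "nonseparable V E S \<longleftrightarrow> S \<subseteq> V \<and> connected_graph S (ind E S) \<and>
     (\<forall>v\<in>S. \<not> articulation_point S (ind E S) v)"

definition block :: "'a set \<Rightarrow> 'a set set \<Rightarrow> 'a set \<Rightarrow> bool" where
  "block V E B \<longleftrightarrow> nonseparable V E B \<and> (\<forall>T. B \<subset> T \<longrightarrow> \<not> nonseparable V E T)"

definition mu :: "'a set \<Rightarrow> 'a set set \<Rightarrow> 'a \<Rightarrow> nat" where
  "mu V E v = card {B. block V E B \<and> v \<in> B}"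

definition min_degree :: "'a set \<Rightarrow> 'a set set \<Rightarrow> nat" where
  "min_degree S F = Min ((\<lambda>u. card {w \<in> S. adj F u w}) ` S)"

text \<open>Pendant path attached to v: P is a connected component of G - v, and G[P \<union> {v}]
  is a path having v as an end (so G[P] is a path one of whose ends is adjacent to v).\<close>
definition path_edges :: "'a list \<Rightarrow> 'a set set" where
  "path_edges ys = {{ys ! i, ys ! Suc i} | i. Suc i < length ys}"

definition pendant_path :: "'a set \<Rightarrow> 'a set set \<Rightarrow> 'a \<Rightarrow> 'a set \<Rightarrow> bool" where
  "pendant_path V E v P \<longleftrightarrow> v \<in> V \<and> P \<in> components (V - {v}) (del_edges E v) \<and>
     (\<exists>xs. xs \<noteq> [] \<and> distinct (v # xs) \<and> set xs = P \<and>
           ind E (P \<union> {v}) = path_edges (v # xs))"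

definition num_pendant_paths :: "'a set \<Rightarrow> 'a set set \<Rightarrow> 'a \<Rightarrow> nat" where
  "num_pendant_paths V E v = card {P. pendant_path V E v P}"

definition pendant_cut_edge :: "'a set \<Rightarrow> 'a set set \<Rightarrow> 'a set \<Rightarrow> bool" where
  "pendant_cut_edge V E e \<longleftrightarrow> (\<exists>v P. pendant_path V E v P \<and> e \<in> ind E (P \<union> {v}))"

inductive_set forced :: "'a set \<Rightarrow> 'a set set \<Rightarrow> 'a set \<Rightarrow> 'a set"
  for V :: "'a set" and E :: "'a set set" and S :: "'a set" where
  init: "x \<in> S \<Longrightarrow> x \<in> forced V E S"
| force: "\<lbrakk>u \<in> forced V E S; w \<in> V; adj E u w;
           \<forall>x\<in>V. adj E u x \<and> x \<noteq> w \<longrightarrow> x \<in> forced V E S\<rbrakk> \<Longrightarrow> w \<in> forced V E S"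

definition zero_forcing_set :: "'a set \<Rightarrow> 'a set set \<Rightarrow> 'a set \<Rightarrow> bool" where
  "zero_forcing_set V E S \<longleftrightarrow> S \<subseteq> V \<and> forced V E S = V"

definition Zc :: "'a set \<Rightarrow> 'a set set \<Rightarrow> nat" where
  "Zc V E = (LEAST k. \<exists>S. zero_forcing_set V E S \<and> connected_graph S (ind E S) \<and> card S = k)"

end

theory Submission
  imports Defs "HOL-Library.Transitive_Closure_Table"
begin



lemma adj_sym: "adj E a b = adj E b a" by (auto simp: adj_def insert_commute)
lemma adj_irrefl: "\<not> adj E a a" by (auto simp: adj_def)

lemma reach_cong:
  assumes "\<And>a b. a \<in> V \<Longrightarrow> b \<in> V \<Longrightarrow> adj F a b = adj E a b"
  shows "reach V F = reach V E"
proof -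
  have "(\<lambda>x y. x\<in>V \<and> y\<in>V \<and> adj F x y) = (\<lambda>x y. x\<in>V \<and> y\<in>V \<and> adj E x y)"
    using assms by (auto simp: fun_eq_iff)
  then show ?thesis by (simp add: reach_def)
qed

lemma reach_ind: "V \<subseteq> S \<Longrightarrow> reach V (ind E S) = reach V E"
  by (rule reach_cong) (auto simp: adj_def ind_def)

lemma reach_del: "reach (V - {v}) (del_edges E v) = reach (V - {v}) E"
  by (rule reach_cong) (auto simp: adj_def del_edges_def)

lemma reach_mono: "reach V E a b \<Longrightarrow> V \<subseteq> W \<Longrightarrow> reach W E a b"
  unfolding reach_def
  by (induction rule: rtranclp_induct) (auto intro: rtranclp.rtrancl_into_rtrancl)

lemma reach_refl: "reach V E a a" by (simp add: reach_def)

lemma reach_edge: "a \<in> V \<Longrightarrow> b \<in> V \<Longrightarrow> adj E a b \<Longrightarrow> reach V E a b"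
  unfolding reach_def by (rule r_into_rtranclp) simp

lemma reach_trans: "reach V E a b \<Longrightarrow> reach V E b c \<Longrightarrow> reach V E a c"
  by (simp add: reach_def)

lemma reach_sym: "reach V E a b \<Longrightarrow> reach V E b a"
  unfolding reach_def
proof (induction rule: rtranclp_induct)
  case base then show ?case by simp
next
  case (step y z)
  then have "(\<lambda>x y. x\<in>V \<and> y\<in>V \<and> adj E x y)\<^sup>*\<^sup>* z y" using adj_sym by fastforce
  then show ?case using step by (meson rtranclp_trans)
qed

lemma reach_in: "reach V E a b \<Longrightarrow> a = b \<or> (a \<in> V \<and> b \<in> V)"
  unfolding reach_def by (induction rule: rtranclp_induct) auto

lemma reach_first: "reach V E a b \<Longrightarrow> a \<noteq> b \<Longrightarrow> \<exists>c\<in>V. adj E a c"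
  unfolding reach_def by (induction rule: converse_rtranclp_induct) auto

lemma reach_closed:
  "reach V E a b \<Longrightarrow> (\<And>x y. x \<in> C \<Longrightarrow> y \<in> V \<Longrightarrow> adj E x y \<Longrightarrow> y \<in> C) \<Longrightarrow> a \<in> C \<Longrightarrow> b \<in> C"
  unfolding reach_def by (induction rule: rtranclp_induct) auto

lemma reach_step: "reach V E a y \<Longrightarrow> y \<in> V \<Longrightarrow> z \<in> V \<Longrightarrow> adj E y z \<Longrightarrow> reach V E a z"
  using reach_edge reach_trans by metis

lemma reach_within:
  assumes "reach V E a b" "a \<in> V"
  shows "reach {w \<in> V. reach V E a w} E a b"
proof -
  let ?C = "{w \<in> V. reach V E a w}"
  have "reach V E a b \<longrightarrow> reach ?C E a b"
  proof
    assume "reach V E a b"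
    then show "reach ?C E a b"
      unfolding reach_def
    proof (induction rule: rtranclp_induct)
      case base then show ?case by simp
    next
      case (step y z)
      have ry: "reach V E a y" using step(1) by (simp add: reach_def)
      have yV: "y \<in> V" "z \<in> V" "adj E y z" using step(2) by auto
      have "y \<in> ?C" using ry yV by auto
      moreover have "z \<in> ?C" using reach_step[OF ry yV] yV by auto
      ultimately show ?case
        apply -
        apply (rule rtranclp.rtrancl_into_rtrancl[OF step(3)])
        using yV(3) by (simp add: reach_def)
    qed
  qed
  then show ?thesis using assms by simp
qed

lemma comp_eq:
  assumes "C \<in> components V E" "a \<in> C"
  shows "C = {w \<in> V. reach V E a w}"
proof -
  obtain v where v: "v \<in> V" "C = {w \<in> V. reach V E v w}" using assms(1) by (auto simp: components_def)
  then have "reach V E v a" "a \<in> V" using assms(2) by auto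
  then show ?thesis using v by (auto intro: reach_trans reach_sym)
qed

lemma comp_self: "a \<in> V \<Longrightarrow> {w \<in> V. reach V E a w} \<in> components V E"
  by (auto simp: components_def)

lemma kappa_ge2:
  assumes "finite V" "a \<in> V" "b \<in> V" "\<not> reach V E a b"
  shows "kappa V E \<ge> 2"
proof -
  let ?c = "\<lambda>v. {w \<in> V. reach V E v w}"
  have "?c a \<noteq> ?c b" using assms reach_refl[of V E b] reach_sym by blast
  moreover have "?c a \<in> components V E" "?c b \<in> components V E" using assms by (auto simp: components_def)
  moreover have "finite (components V E)" using assms(1) by (simp add: components_def)
  ultimately show ?thesis unfolding kappa_def
    by (metis card_2_iff' card_mono empty_subsetI insert_subset not_less_eq_eq numeral_2_eq_2 card_le_Suc0_iff_eq)
qed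

lemma kappa_le1_reach:
  assumes "finite V" "kappa V E \<le> 1" "a \<in> V" "b \<in> V"
  shows "reach V E a b"
proof (rule ccontr)
  assume "\<not> ?thesis"
  from kappa_ge2[OF assms(1,3,4) this] assms(2) show False by simp
qed

lemma kappa_conn:
  assumes "\<forall>a\<in>V. \<forall>b\<in>V. reach V E a b" "V \<noteq> {}"
  shows "kappa V E = 1"
proof -
  have "components V E = {V}" using assms by (auto simp: components_def intro: reach_sym)
  then show ?thesis by (simp add: kappa_def)
qed

lemma kappa_empty: "kappa {} E = 0" by (simp add: kappa_def components_def)




lemma kappa_cong: "reach V F = reach V E \<Longrightarrow> kappa V F = kappa V E"
  by (simp add: kappa_def components_def)

locale graph =
  fixes V :: "'a set" and E :: "'a set set"
  assumes sg: "simple_graph V E" and gconn: "connected_graph V E"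
begin

definition conn :: "'a set \<Rightarrow> bool" where
  "conn S \<longleftrightarrow> (\<forall>a\<in>S. \<forall>b\<in>S. reach S E a b)"

lemma finV: "finite V" using sg by (simp add: simple_graph_def)

lemma adjV: "adj E a b \<Longrightarrow> a \<in> V \<and> b \<in> V"
  using sg unfolding simple_graph_def adj_def by (metis doubleton_eq_iff)

lemma adj_edge: "adj E a b \<Longrightarrow> {a, b} \<in> E" by (simp add: adj_def)

lemma connV: "conn V" "V \<noteq> {}" using gconn by (auto simp: connected_graph_def conn_def)

lemma conn_kappa_le1: "finite S \<Longrightarrow> conn S \<longleftrightarrow> kappa S E \<le> 1"
proof
  assume "finite S" "conn S"
  then show "kappa S E \<le> 1"
    by (cases "S = {}") (auto simp: conn_def kappa_empty dest: kappa_conn)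
next
  assume "finite S" "kappa S E \<le> 1"
  then show "conn S" by (auto simp: conn_def intro: kappa_le1_reach)
qed

lemma nonsep_iff:
  "nonseparable V E S \<longleftrightarrow> S \<subseteq> V \<and> S \<noteq> {} \<and> conn S \<and> (\<forall>v\<in>S. conn (S - {v}))"
proof (cases "S \<subseteq> V")
  case False then show ?thesis by (simp add: nonseparable_def)
next
  case True
  then have fin: "finite S" using finV finite_subset by blast
  have r1: "reach S (ind E S) = reach S E" by (simp add: reach_ind)
  have r2: "\<And>v. reach (S - {v}) (del_edges (ind E S) v) = reach (S - {v}) E"
    by (simp add: reach_del reach_ind Diff_subset)
  have cg: "connected_graph S (ind E S) \<longleftrightarrow> S \<noteq> {} \<and> conn S"
    by (simp add: connected_graph_def conn_def r1)
  have k1: "conn S \<Longrightarrow> S \<noteq> {} \<Longrightarrow> kappa S (ind E S) = 1"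
    using kappa_conn[of S "ind E S"] by (simp add: r1 conn_def)
  have ap: "conn S \<Longrightarrow> S \<noteq> {} \<Longrightarrow> v \<in> S \<Longrightarrow> articulation_point S (ind E S) v \<longleftrightarrow> \<not> conn (S - {v})" for v
    using k1 kappa_cong[OF r2[of v]] conn_kappa_le1[of "S - {v}"] fin
    by (auto simp: articulation_point_def)
  show ?thesis unfolding nonseparable_def using True cg ap by auto
qed

lemma nonsepD:
  assumes "nonseparable V E S"
  shows "S \<subseteq> V" "S \<noteq> {}" "\<And>a b. a \<in> S \<Longrightarrow> b \<in> S \<Longrightarrow> reach S E a b"
    "\<And>v a b. a \<in> S - {v} \<Longrightarrow> b \<in> S - {v} \<Longrightarrow> reach (S - {v}) E a b"
proof -
  show "S \<subseteq> V" "S \<noteq> {}" "\<And>a b. a \<in> S \<Longrightarrow> b \<in> S \<Longrightarrow> reach S E a b"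
    using assms by (auto simp: nonsep_iff conn_def)
  fix v a b assume "a \<in> S - {v}" "b \<in> S - {v}"
  then show "reach (S - {v}) E a b" using assms
    by (cases "v \<in> S") (auto simp: nonsep_iff conn_def)
qed

lemma nonsep_single: "x \<in> V \<Longrightarrow> nonseparable V E {x}"
  by (auto simp: nonsep_iff conn_def reach_refl)

lemma nonsep_edge: assumes "adj E a b" shows "nonseparable V E {a, b}"
proof -
  have "a \<in> V" "b \<in> V" "a \<noteq> b" using adjV[OF assms] assms by (auto simp: adj_def)
  moreover have "reach {a,b} E a b" "reach {a,b} E b a"
    using assms reach_edge[of a "{a,b}" b E] reach_sym by auto
  ultimately show ?thesis
    by (auto simp: nonsep_iff conn_def reach_refl)
qed

lemma block_nonsep: "block V E B \<Longrightarrow> nonseparable V E B" by (simp add: block_def)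
lemma block_max: "block V E B \<Longrightarrow> nonseparable V E T \<Longrightarrow> B \<subseteq> T \<Longrightarrow> T = B"
  by (auto simp: block_def)
lemma blockV: "block V E B \<Longrightarrow> B \<subseteq> V" by (simp add: block_def nonseparable_def)

lemma finite_blocks: "finite {B. block V E B}"
proof -
  have "{B. block V E B} \<subseteq> Pow V" using blockV by auto
  then show ?thesis using finV finite_subset by blast
qed

lemma finite_blocksP: "finite {B. block V E B \<and> P B}"
  using finite_blocks by (rule rev_finite_subset) auto

lemma exists_block:
  assumes "nonseparable V E A"
  shows "\<exists>B. block V E B \<and> A \<subseteq> B"
proof -
  let ?F = "{T. nonseparable V E T \<and> A \<subseteq> T}"
  have AF: "A \<in> ?F" using assms by simp
  have cl: "\<forall>T. T\<in>?F \<longrightarrow> card T < Suc (card V)"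
  proof (intro allI impI)
    fix T assume "T\<in>?F" then have "T \<subseteq> V" by (simp add: nonseparable_def)
    then show "card T < Suc (card V)" using card_mono[OF finV] by (simp add: less_Suc_eq_le)
  qed
  obtain B where B: "B \<in> ?F" "\<forall>T. T\<in>?F \<longrightarrow> card T \<le> card B"
    using Lattices_Big.ex_has_greatest_nat[OF AF cl] by blast
  have "block V E B"
    unfolding block_def
  proof (intro conjI allI impI)
    show "nonseparable V E B" using B by simp
    fix T assume BT: "B \<subset> T"
    show "\<not> nonseparable V E T"
    proof
      assume nT: "nonseparable V E T"
      then have TF: "T \<in> ?F" using B BT by auto
      have "finite T" using nT finV nonsepD(1) finite_subset by blast
      then have "card B < card T" using BT psubset_card_mono by blast
      moreover have "card T \<le> card B" using B(2) TF by blast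
      ultimately show False by simp
    qed
  qed
  then show ?thesis using B by auto
qed

lemma block_nontriv:
  assumes "block V E B" "s \<in> B" "adj E s t"
  shows "\<exists>b\<in>B. b \<noteq> s"
proof (rule ccontr)
  assume "\<not> ?thesis"
  then have B: "B = {s}" using assms(2) by blast
  have "{s, t} = B" by (rule block_max[OF assms(1) nonsep_edge[OF assms(3)]]) (simp add: B)
  moreover have "s \<noteq> t" using assms(3) by (auto simp: adj_def)
  ultimately show False using B by blast
qed

lemma card_ge2: assumes "finite B" "s \<in> B" "b \<in> B" "b \<noteq> s" shows "card B \<ge> 2"
proof -
  have "card {s, b} \<le> card B" using assms by (intro card_mono) auto
  then show ?thesis using assms(4) by simp
qed

end



lemma path_reach:
  assumes "rtrancl_path r p xs q" "\<And>u v. r u v \<Longrightarrow> adj E u v" "set (p # xs) \<subseteq> W"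
  shows "reach W E p q"
  using assms
proof (induction rule: rtrancl_path.induct)
  case (base x) then show ?case by (simp add: reach_refl)
next
  case (step x y ys z)
  have "reach W E y z" using step by simp
  moreover have "reach W E x y" using step by (intro reach_edge) auto
  ultimately show ?case by (rule reach_trans[rotated])
qed

lemma path_last_in: "rtrancl_path r p xs q \<Longrightarrow> q \<in> set (p # xs)"
  by (induction rule: rtrancl_path.induct) auto

lemma path_elems: "rtrancl_path r p xs q \<Longrightarrow> z \<in> set xs \<Longrightarrow> \<exists>u. r u z"
  by (induction rule: rtrancl_path.induct) auto

context graph begin

lemma KL:
  assumes B1: "block V E B1" and B2: "block V E B2" and x1: "x \<in> B1" and x2: "x \<in> B2"
    and a: "a \<in> B1" "a \<noteq> x" and b: "b \<in> B2" "b \<noteq> x" and ab: "reach (V - {x}) E a b"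
  shows "B1 = B2"
proof -
  define r where "r = (\<lambda>p q. p \<in> V - {x} \<and> q \<in> V - {x} \<and> adj E p q)"
  have radj: "\<And>u v. r u v \<Longrightarrow> adj E u v" by (simp add: r_def)
  have rV: "\<And>u v. r u v \<Longrightarrow> v \<in> V - {x}" by (simp add: r_def)
  define Cand where "Cand n \<longleftrightarrow> (\<exists>a b xs. a \<in> B1 \<and> a \<noteq> x \<and> b \<in> B2 \<and> b \<noteq> x \<and> rtrancl_path r a xs b \<and> length xs = n)" for n
  obtain xs where "rtrancl_path r a xs b" using ab unfolding reach_def r_def rtranclp_eq_rtrancl_path by blast
  then have "Cand (length xs)" using a b unfolding Cand_def by blast
  define n0 where "n0 = (LEAST n. Cand n)"
  have "Cand n0" unfolding n0_def by (rule LeastI) fact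
  then obtain a0 b0 xs0 where c0: "a0 \<in> B1" "a0 \<noteq> x" "b0 \<in> B2" "b0 \<noteq> x" "rtrancl_path r a0 xs0 b0" "length xs0 = n0"
    unfolding Cand_def by blast
  have minl: "\<And>a' b' ys. a' \<in> B1 \<Longrightarrow> a' \<noteq> x \<Longrightarrow> b' \<in> B2 \<Longrightarrow> b' \<noteq> x \<Longrightarrow> rtrancl_path r a' ys b' \<Longrightarrow> length ys < n0 \<Longrightarrow> False"
  proof -
    fix a' b' ys assume h: "a' \<in> B1" "a' \<noteq> x" "b' \<in> B2" "b' \<noteq> x" "rtrancl_path r a' ys b'" "length ys < n0"
    then have "Cand (length ys)" unfolding Cand_def by blast
    then show False using not_less_Least[of "length ys" Cand] h(6) unfolding n0_def by blast
  qed
  have xs0V: "set xs0 \<subseteq> V - {x}" using path_elems[OF c0(5)] rV by blast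
  have B1V: "B1 \<subseteq> V" and B2V: "B2 \<subseteq> V" using B1 B2 blockV by auto
  have a0V: "a0 \<in> V - {x}" using c0 B1V by auto
  have b0V: "b0 \<in> V - {x}" using c0 B2V by auto
  have dist: "distinct (a0 # xs0)"
  proof (rule ccontr)
    assume nd: "\<not> distinct (a0 # xs0)"
    obtain xs' where xs': "rtrancl_path r a0 xs' b0" "distinct (a0 # xs')" "set xs' \<subseteq> set xs0"
      using rtrancl_path_distinct[OF c0(5)] by blast
    have "length xs' = card (set xs')" using xs'(2) by (simp add: distinct_card)
    also have "\<dots> \<le> card (set xs0 - {a0})" using xs' by (intro card_mono) auto
    also have "\<dots> < length xs0"
    proof (cases "a0 \<in> set xs0")
      case True
      then have "card (set xs0 - {a0}) < card (set xs0)" by (intro card_Diff1_less) auto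
      also have "\<dots> \<le> length xs0" by (rule card_length)
      finally show ?thesis .
    next
      case False
      then have "\<not> distinct xs0" using nd by simp
      then have "card (set xs0) \<noteq> length xs0" using card_distinct by blast
      then have "card (set xs0) < length xs0" using card_length le_neq_implies_less by blast
      then show ?thesis using False by simp
    qed
    finally show False using minl[OF c0(1-4) xs'(1)] c0(6) by simp
  qed
  have noB1: "y \<notin> B1" if "xs0 = ys @ y # zs" for ys y zs
  proof
    assume yB: "y \<in> B1"
    from c0(5) that obtain p: "rtrancl_path r y zs b0" by (auto elim: rtrancl_path_appendE)
    have "y \<noteq> x" using xs0V that by auto
    moreover have "length zs < n0" using c0(6) that by simp
    ultimately show False using minl[OF yB _ c0(3,4) p] by simp
  qed
  have noB2: "y \<notin> B2" if "xs0 = ys @ y # zs" "zs \<noteq> []" for ys y zs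
  proof
    assume yB: "y \<in> B2"
    from c0(5) that obtain p: "rtrancl_path r a0 (ys @ [y]) y" by (auto elim: rtrancl_path_appendE)
    have "y \<noteq> x" using xs0V that by auto
    moreover have "length (ys @ [y]) < n0" using c0(6) that by (cases zs) auto
    ultimately show False using minl[OF c0(1,2) yB _ p] by simp
  qed
  define T where "T = B1 \<union> B2 \<union> set xs0"
  have TV: "T \<subseteq> V" using B1V B2V xs0V by (auto simp: T_def)
  have sub1: "B1 - {v} \<subseteq> T - {v}" and sub2: "B2 - {v} \<subseteq> T - {v}" for v by (auto simp: T_def)
  have n1: "nonseparable V E B1" and n2: "nonseparable V E B2" using B1 B2 block_nonsep by auto
  have claimx: "reach (T - {x}) E w a0" if w: "w \<in> T - {x}" for w
  proof -
    have pa: "reach (T - {x}) E a0 b0"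
      by (rule path_reach[OF c0(5) radj]) (use c0 xs0V in \<open>auto simp: T_def\<close>)
    consider "w \<in> B1" | "w \<in> B2" | "w \<in> set xs0" using w by (auto simp: T_def)
    then show ?thesis
    proof cases
      case 1
      then have "w \<in> B1 - {x}" "a0 \<in> B1 - {x}" using w c0 by auto
      then show ?thesis using reach_mono[OF nonsepD(4)[OF n1] sub1] by blast
    next
      case 2
      then have "w \<in> B2 - {x}" "b0 \<in> B2 - {x}" using w c0 by auto
      then have "reach (T - {x}) E w b0" using reach_mono[OF nonsepD(4)[OF n2] sub2] by blast
      then show ?thesis using reach_trans[OF _ reach_sym[OF pa]] by blast
    next
      case 3
      then obtain ys zs where sp: "xs0 = ys @ w # zs" by (meson split_list)
      from c0(5) sp obtain "rtrancl_path r a0 (ys @ [w]) w" by (auto elim: rtrancl_path_appendE)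
      then have "reach (T - {x}) E a0 w"
        by (rule path_reach[OF _ radj]) (use sp c0 xs0V in \<open>auto simp: T_def\<close>)
      then show ?thesis by (rule reach_sym)
    qed
  qed
  have claimv: "reach (T - {v}) E w x" if v: "v \<in> T" "v \<noteq> x" and w: "w \<in> T - {v}" for v w
  proof -
    have r1: "reach (T - {v}) E u x" if "u \<in> B1 - {v}" for u
    proof -
      have "x \<in> B1 - {v}" using x1 v by blast
      then show ?thesis using reach_mono[OF nonsepD(4)[OF n1 that] sub1] by blast
    qed
    have r2: "reach (T - {v}) E u x" if "u \<in> B2 - {v}" for u
    proof -
      have "x \<in> B2 - {v}" using x2 v by blast
      then show ?thesis using reach_mono[OF nonsepD(4)[OF n2 that] sub2] by blast
    qed
    consider "w \<in> B1" | "w \<in> B2" | "w \<in> set xs0" using w unfolding T_def by blast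
    then show ?thesis
    proof cases
      case 1 then show ?thesis using r1 w by blast
    next
      case 2 then show ?thesis using r2 w by blast
    next
      case 3
      then obtain ys zs where sp: "xs0 = ys @ w # zs" by (meson split_list)
      from c0(5) sp obtain p1: "rtrancl_path r a0 (ys @ [w]) w" and p2: "rtrancl_path r w zs b0"
        by (auto elim: rtrancl_path_appendE)
      have wv: "w \<noteq> v" using w by blast
      show ?thesis
      proof (cases "v \<in> set (a0 # ys)")
        case False
        have "set (a0 # ys @ [w]) \<subseteq> T - {v}"
        proof -
          have "set (a0 # ys @ [w]) \<subseteq> T" using sp c0(1) unfolding T_def by auto
          moreover have "v \<notin> set (a0 # ys @ [w])" using False wv by simp
          ultimately show ?thesis by blast
        qed
        note path_reach[OF p1 radj this]
        then have aw: "reach (T - {v}) E a0 w" .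
        have "a0 \<in> B1 - {v}" using c0(1) False by auto
        then have "reach (T - {v}) E a0 x" by (rule r1)
        then show ?thesis using reach_trans[OF reach_sym[OF aw]] by blast
      next
        case True
        have "distinct (a0 # ys @ w # zs)" using dist sp by simp
        then have "set (a0 # ys) \<inter> set zs = {}" by simp
        then have vz: "v \<notin> set zs" using True by blast
        have "set (w # zs) \<subseteq> T - {v}"
        proof -
          have "set (w # zs) \<subseteq> T" using sp unfolding T_def by auto
          moreover have "v \<notin> set (w # zs)" using vz wv by simp
          ultimately show ?thesis by blast
        qed
        note path_reach[OF p2 radj this]
        then have rw: "reach (T - {v}) E w b0" .
        have "b0 \<in> set (w # zs)" using path_last_in[OF p2] .
        then have "b0 \<noteq> v" using vz wv by auto
        then have "b0 \<in> B2 - {v}" using c0(3) by simp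
        then have "reach (T - {v}) E b0 x" by (rule r2)
        then show ?thesis using reach_trans[OF rw] by blast
      qed
    qed
  qed
  have "nonseparable V E T"
    unfolding nonsep_iff conn_def
  proof (intro conjI ballI)
    show "T \<subseteq> V" by (rule TV)
    show "T \<noteq> {}" using x1 by (auto simp: T_def)
  next
    fix p q assume pq: "p \<in> T" "q \<in> T"
    have all: "reach T E w a0" if "w \<in> T" for w
    proof (cases "w = x")
      case True
      have "reach B1 E x a0" using nonsepD(3)[OF n1] x1 c0 by blast
      then have "reach T E x a0" by (rule reach_mono) (auto simp: T_def)
      then show ?thesis using True by simp
    next
      case False
      then have "reach (T - {x}) E w a0" using claimx that by blast
      then show ?thesis by (rule reach_mono) auto
    qed
    show "reach T E p q" using reach_trans[OF all[OF pq(1)] reach_sym[OF all[OF pq(2)]]] .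
  next
    fix v p q assume v: "v \<in> T" and pq: "p \<in> T - {v}" "q \<in> T - {v}"
    show "reach (T - {v}) E p q"
    proof (cases "v = x")
      case True
      then show ?thesis using reach_trans[OF claimx[of p] reach_sym[OF claimx[of q]]] pq by blast
    next
      case False
      then show ?thesis using reach_trans[OF claimv[OF v False, of p] reach_sym[OF claimv[OF v False, of q]]] pq by blast
    qed
  qed
  then have "T = B1" using block_max[OF B1] by (auto simp: T_def)
  then have "B2 \<subseteq> B1" by (auto simp: T_def)
  then show ?thesis using block_max[OF B2 n1] by simp
qed

end



lemma comps_cong: "reach V F = reach V E \<Longrightarrow> components V F = components V E"
  by (simp add: components_def)

context graph begin

lemma path_block:
  assumes n: "nonseparable V E B" and sub: "B \<subseteq> set ys" and c2: "card B \<ge> 2"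
    and d: "distinct ys" and pe: "ind E (set ys) = path_edges ys"
  shows "B \<in> ind E (set ys)"
proof -
  have finB: "finite B" using n finV nonsepD(1) finite_subset by blast
  define I where "I = {i. i < length ys \<and> ys ! i \<in> B}"
  have finI: "finite I" unfolding I_def by auto
  have "B \<noteq> {}" using n nonsepD(2) by blast
  then obtain b where "b \<in> B" by blast
  then obtain j where "j < length ys" "ys ! j = b" using sub by (metis in_mono in_set_conv_nth)
  then have "j \<in> I" using \<open>b \<in> B\<close> by (simp add: I_def)
  then have Ine: "I \<noteq> {}" by blast
  define i0 where "i0 = Max I"
  have i0I: "i0 \<in> I" unfolding i0_def using finI Ine by (rule Max_in)
  have i0max: "\<And>i. i \<in> I \<Longrightarrow> i \<le> i0" unfolding i0_def using finI by simp
  define u where "u = ys ! i0"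
  have uB: "u \<in> B" and i0l: "i0 < length ys" using i0I by (auto simp: I_def u_def)
  have nb: "0 < i0 \<and> w = ys ! (i0 - 1)" if wB: "w \<in> B" and uw: "adj E u w" for w
  proof -
    have "{u, w} \<in> E" using uw by (rule adj_edge)
    moreover have "w \<in> set ys" using wB sub by blast
    moreover have "u \<in> set ys" using uB sub by blast
    ultimately have "{u, w} \<in> path_edges ys" using pe[symmetric] by (auto simp: ind_def)
    then obtain j where j: "{u, w} = {ys ! j, ys ! Suc j}" "Suc j < length ys"
      by (auto simp: path_edges_def)
    have uw': "u \<noteq> w" using uw by (auto simp: adj_def)
    from j(1) uw' consider "u = ys ! j" "w = ys ! Suc j" | "u = ys ! Suc j" "w = ys ! j"
      by (metis doubleton_eq_iff)
    then show ?thesis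
    proof cases
      case 1
      then have "j = i0" using d i0l j(2) by (simp add: u_def nth_eq_iff_index_eq)
      then have "Suc i0 \<in> I" using 1 j(2) wB by (simp add: I_def)
      then show ?thesis using i0max by fastforce
    next
      case 2
      then have "Suc j = i0" using d i0l j(2) by (simp add: u_def nth_eq_iff_index_eq)
      then show ?thesis using 2 by auto
    qed
  qed
  obtain b2 where b2: "b2 \<in> B" "b2 \<noteq> u"
  proof -
    have "B \<noteq> {u}" using c2 by auto
    then show ?thesis using that uB by blast
  qed
  have "reach B E u b2" using nonsepD(3)[OF n uB b2(1)] .
  then obtain c where c: "c \<in> B" "adj E u c" using reach_first b2(2) by metis
  define w0 where "w0 = ys ! (i0 - 1)"
  have cw0: "c = w0" using nb[OF c] by (simp add: w0_def)
  have "card B \<le> 2"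
  proof (rule ccontr)
    assume "\<not> card B \<le> 2"
    moreover have "card {u, w0} \<le> 2" by (cases "u = w0") auto
    ultimately have "card B > card {u, w0}" by simp
    then have "\<not> B \<subseteq> {u, w0}" using card_mono by (metis finite.emptyI finite.insertI leD)
    then obtain z where z: "z \<in> B" "z \<noteq> u" "z \<noteq> w0" by blast
    have "u \<noteq> w0" using c cw0 by (auto simp: adj_def)
    then have "reach (B - {w0}) E u z" using nonsepD(4)[OF n, of u w0 z] uB z by blast
    then obtain c' where c': "c' \<in> B - {w0}" "adj E u c'" using reach_first z(2) by metis
    then show False using nb[of c'] by (simp add: w0_def)
  qed
  moreover have "{u, w0} \<subseteq> B" using uB c cw0 by blast
  moreover have "card {u, w0} = 2" using c cw0 by (auto simp: adj_def)
  ultimately have "B = {u, w0}" using finB c2 by (metis card_subset_eq le_antisym)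
  moreover have "{u, w0} \<in> E" using c cw0 adj_edge by blast
  ultimately show ?thesis using sub by (simp add: ind_def)
qed

lemma pendant_comp:
  assumes "pendant_path V E x P" "s \<in> P"
  shows "P = {w \<in> V - {x}. reach (V - {x}) E s w}"
proof -
  have "P \<in> components (V - {x}) (del_edges E x)"
    using assms(1) by (simp add: pendant_path_def)
  then have "P \<in> components (V - {x}) E" using comps_cong[OF reach_del, of V x E] by simp
  then show ?thesis using assms(2) by (rule comp_eq)
qed

lemma pendant_sub: assumes "pendant_path V E x P" shows "P \<subseteq> V - {x}"
proof
  fix z assume z: "z \<in> P"
  have "z \<in> {w \<in> V - {x}. reach (V - {x}) E z w}" using pendant_comp[OF assms z] z by simp
  then show "z \<in> V - {x}" by simp
qed

lemma pendant_nbr: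
  assumes "pendant_path V E x P"
  shows "\<exists>x1\<in>P. adj E x x1"
proof -
  obtain xs where xs: "xs \<noteq> []" "distinct (x # xs)" "set xs = P" "ind E (P \<union> {x}) = path_edges (x # xs)"
    using assms by (auto simp: pendant_path_def)
  have "{x, hd xs} \<in> path_edges (x # xs)" unfolding path_edges_def
    using xs(1) by (auto intro!: exI[of _ 0] simp: hd_conv_nth)
  then have "{x, hd xs} \<in> E" using xs(4) by (auto simp: ind_def)
  moreover have "x \<noteq> hd xs" using xs(1,2) by (cases xs) auto
  moreover have "hd xs \<in> P" using xs(1,3) by auto
  ultimately show ?thesis by (auto simp: adj_def)
qed

lemma pendant_block:
  assumes pp: "pendant_path V E x P" and n: "nonseparable V E B" and s: "s \<in> B" "s \<in> P"
    and c2: "card B \<ge> 2"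
  shows "pendant_cut_edge V E B"
proof -
  obtain xs where xs: "xs \<noteq> []" "distinct (x # xs)" "set xs = P" "ind E (P \<union> {x}) = path_edges (x # xs)"
    using pp by (auto simp: pendant_path_def)
  have Pc: "P = {w \<in> V - {x}. reach (V - {x}) E s w}" using pendant_comp[OF pp s(2)] .
  have sx: "s \<noteq> x" using Pc s(2) by blast
  have BV: "B \<subseteq> V" using n nonsepD(1) by blast
  have "B \<subseteq> P \<union> {x}"
  proof
    fix z assume z: "z \<in> B"
    show "z \<in> P \<union> {x}"
    proof (cases "z = x")
      case False
      have "reach (B - {x}) E s z" using nonsepD(4)[OF n, of s x z] z s sx False by blast
      then have "reach (V - {x}) E s z" by (rule reach_mono) (use BV in blast)
      then show ?thesis using Pc False z BV by blast
    qed simp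
  qed
  then have "B \<subseteq> set (x # xs)" using xs(3) by auto
  moreover have "ind E (set (x # xs)) = path_edges (x # xs)" using xs by (simp add: Un_commute)
  ultimately have "B \<in> ind E (set (x # xs))" using path_block[OF n _ c2 xs(2)] by blast
  then have "B \<in> ind E (P \<union> {x})" using xs(3) by (simp add: Un_commute)
  then show ?thesis using pp unfolding pendant_cut_edge_def by blast
qed

end



locale zf = graph +
  fixes S :: "'a set"
  assumes zfS: "zero_forcing_set V E S" and connS: "connected_graph S (ind E S)"
begin

primrec stage :: "nat \<Rightarrow> 'a set" where
  "stage 0 = S"
| "stage (Suc k) = stage k \<union> {w \<in> V. \<exists>u\<in>stage k. adj E u w \<and> (\<forall>z\<in>V. adj E u z \<and> z \<noteq> w \<longrightarrow> z \<in> stage k)}"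

definition rank :: "'a \<Rightarrow> nat" where "rank x = (LEAST k. x \<in> stage k)"

lemma SV: "S \<subseteq> V" using zfS by (simp add: zero_forcing_set_def)

lemma stage_mono: "i \<le> j \<Longrightarrow> stage i \<subseteq> stage j"
  by (induction j) (auto simp: le_Suc_eq)

lemma forced_stage: "x \<in> forced V E S \<Longrightarrow> \<exists>k. x \<in> stage k"
proof (induction rule: forced.induct)
  case (init x) then show ?case by (auto intro: exI[of _ 0])
next
  case (force u w)
  obtain i where i: "u \<in> stage i" using force.IH by blast
  define N where "N = {z \<in> V. adj E u z \<and> z \<noteq> w}"
  have finN: "finite N" using finV by (simp add: N_def)
  have "\<forall>z\<in>N. \<exists>k. z \<in> stage k" using force by (auto simp: N_def)
  then obtain f where f: "\<forall>z\<in>N. z \<in> stage (f z)" by metis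
  define K where "K = Max (insert i (f ` N))"
  have fin: "finite (insert i (f ` N))" using finN by simp
  have iK: "i \<le> K" unfolding K_def using fin by simp
  have fK: "f z \<le> K" if "z \<in> N" for z unfolding K_def using fin that by simp
  have "u \<in> stage K" using i stage_mono[OF iK] by blast
  moreover have "\<forall>z\<in>V. adj E u z \<and> z \<noteq> w \<longrightarrow> z \<in> stage K"
  proof (intro ballI impI)
    fix z assume "z \<in> V" "adj E u z \<and> z \<noteq> w"
    then have zN: "z \<in> N" by (simp add: N_def)
    then show "z \<in> stage K" using f stage_mono[OF fK[OF zN]] by blast
  qed
  ultimately have "w \<in> stage (Suc K)" using force by auto
  then show ?case by blast
qed

lemma stageV: "x \<in> V \<Longrightarrow> x \<in> stage (rank x)"
proof -
  assume "x \<in> V"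
  then have "x \<in> forced V E S" using zfS by (simp add: zero_forcing_set_def)
  then obtain k where "x \<in> stage k" using forced_stage by blast
  then show ?thesis unfolding rank_def by (rule LeastI)
qed

lemma rank_le: "x \<in> stage k \<Longrightarrow> rank x \<le> k"
  unfolding rank_def by (rule Least_le)

lemma forcer:
  assumes x: "x \<in> V" "x \<notin> S"
  shows "\<exists>u\<in>V. adj E u x \<and> rank u < rank x \<and> (\<forall>z\<in>V. adj E u z \<and> z \<noteq> x \<longrightarrow> rank z < rank x)"
proof -
  have xs: "x \<in> stage (rank x)" using stageV[OF x(1)] .
  have "rank x \<noteq> 0" using xs x(2) by (metis stage.simps(1))
  then obtain k where k: "rank x = Suc k" using not0_implies_Suc by blast
  have "x \<notin> stage k"
  proof
    assume "x \<in> stage k"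
    then have "rank x \<le> k" by (rule rank_le)
    then show False using k by simp
  qed
  then obtain u where u: "u \<in> stage k" "adj E u x" "\<forall>z\<in>V. adj E u z \<and> z \<noteq> x \<longrightarrow> z \<in> stage k"
    using xs k by auto
  have "u \<in> V" using adjV[OF u(2)] by blast
  moreover have "rank u < rank x" using rank_le[OF u(1)] k by simp
  moreover have "\<forall>z\<in>V. adj E u z \<and> z \<noteq> x \<longrightarrow> rank z < rank x"
    using u(3) rank_le k by (metis less_Suc_eq_le)
  ultimately show ?thesis using u(2) by blast
qed

end



context zf begin

definition IF :: "'a set \<Rightarrow> 'a \<Rightarrow> bool" where
  "IF B y \<longleftrightarrow> (\<exists>u\<in>B. adj E u y \<and> rank u < rank y \<and> (\<forall>z\<in>V. adj E u z \<and> z \<noteq> y \<longrightarrow> rank z < rank y))"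

definition D :: "'a set \<Rightarrow> 'a set" where
  "D B = {y \<in> B. y \<in> S \<or> \<not> IF B y}"

lemma adj_ind: "u \<in> B \<Longrightarrow> w \<in> B \<Longrightarrow> adj (ind E B) u w \<longleftrightarrow> adj E u w"
  by (auto simp: adj_def ind_def)

lemma delta_le:
  assumes B: "block V E B"
  shows "min_degree B (ind E B) \<le> card (D B)"
proof -
  have BV: "B \<subseteq> V" using blockV[OF B] .
  have finB: "finite B" using BV finV finite_subset by blast
  have Bne: "B \<noteq> {}" using nonsepD(2)[OF block_nonsep[OF B]] .
  define deg where "deg u = card {w \<in> B. adj (ind E B) u w}" for u
  have md: "min_degree B (ind E B) \<le> deg u" if "u \<in> B" for u
    unfolding min_degree_def deg_def using finB that by (intro Min_le) auto
  have finD: "finite (D B)" using finB by (simp add: D_def)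
  define J where "J = {y \<in> B. y \<notin> S \<and> IF B y}"
  show ?thesis
  proof (cases "J = {}")
    case True
    then have "D B = B" by (auto simp: D_def J_def)
    obtain u where u: "u \<in> B" using Bne by blast
    have "deg u \<le> card B" unfolding deg_def using finB by (intro card_mono) auto
    then show ?thesis using md[OF u] \<open>D B = B\<close> by simp
  next
    case False
    have finJ: "finite J" using finB by (simp add: J_def)
    define m where "m = Min (rank ` J)"
    have "m \<in> rank ` J" unfolding m_def using finJ False by (intro Min_in) auto
    then obtain y where y: "y \<in> J" "rank y = m" by blast
    have ymin: "rank y \<le> rank y'" if "y' \<in> J" for y'
      using y(2) finJ that unfolding m_def by simp
    from y(1) obtain u where u: "u \<in> B" "adj E u y" "rank u < rank y"
      "\<forall>z\<in>V. adj E u z \<and> z \<noteq> y \<longrightarrow> rank z < rank y"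
      by (auto simp: J_def IF_def)
    have uD: "u \<in> D B"
    proof (rule ccontr)
      assume "u \<notin> D B"
      then have "u \<in> J" using u(1) by (auto simp: D_def J_def)
      then show False using ymin[of u] u(3) by simp
    qed
    have "{w \<in> B. adj (ind E B) u w} \<subseteq> insert y (D B - {u})"
    proof
      fix w assume w: "w \<in> {w \<in> B. adj (ind E B) u w}"
      then have wB: "w \<in> B" and uw: "adj E u w" using adj_ind[OF u(1)] by auto
      show "w \<in> insert y (D B - {u})"
      proof (cases "w = y")
        case False
        have "rank w < rank y" using u(4) uw False BV wB by blast
        then have "w \<notin> J" using ymin[of w] by auto
        moreover have "w \<noteq> u" using uw by (auto simp: adj_def)
        ultimately show ?thesis using wB by (auto simp: D_def J_def)
      qed simp
    qed
    then have "deg u \<le> card (insert y (D B - {u}))" unfolding deg_def using finD by (intro card_mono) auto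
    also have "\<dots> \<le> Suc (card (D B - {u}))" using finD by (simp add: card_insert_if)
    also have "\<dots> = card (D B)" by (rule card_Suc_Diff1[OF finD uD])
    finally show ?thesis using md[OF u(1)] by simp
  qed
qed

lemma D_sub: "D B \<subseteq> B" by (auto simp: D_def)

lemma double_count:
  assumes "finite Bs" "\<And>B. B \<in> Bs \<Longrightarrow> B \<subseteq> V"
  shows "(\<Sum>B\<in>Bs. card (D B)) = (\<Sum>x\<in>V. card {B \<in> Bs. x \<in> D B})"
proof -
  have "card (D B) = (\<Sum>x\<in>V. if x \<in> D B then 1 else 0)" if "B \<in> Bs" for B
  proof -
    have "D B = {x \<in> V. x \<in> D B}" using assms(2)[OF that] D_sub by blast
    then have "card (D B) = card {x \<in> V. x \<in> D B}" by simp
    also have "\<dots> = (\<Sum>x\<in>{x \<in> V. x \<in> D B}. 1)" by simp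
    also have "\<dots> = (\<Sum>x\<in>V. if x \<in> D B then 1 else 0)" using finV by (rule sum.inter_filter)
    finally show ?thesis .
  qed
  then have "(\<Sum>B\<in>Bs. card (D B)) = (\<Sum>B\<in>Bs. \<Sum>x\<in>V. if x \<in> D B then 1 else 0)" by simp
  also have "\<dots> = (\<Sum>x\<in>V. \<Sum>B\<in>Bs. if x \<in> D B then 1 else 0)" by (rule sum.swap)
  also have "\<dots> = (\<Sum>x\<in>V. card {B \<in> Bs. x \<in> D B})"
  proof (rule sum.cong)
    fix x
    have "(\<Sum>B\<in>Bs. if x \<in> D B then 1 else 0) = (\<Sum>B\<in>{B \<in> Bs. x \<in> D B}. 1::nat)"
      using assms(1) by (rule sum.inter_filter[symmetric])
    then show "(\<Sum>B\<in>Bs. if x \<in> D B then 1 else 0) = card {B \<in> Bs. x \<in> D B}" by simp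
  qed simp
  finally show ?thesis .
qed

end



lemma kappa2_reach:
  assumes fin: "finite W" and k: "kappa W E = 2" and P: "P \<in> components W E"
    and a: "a \<in> W" "a \<notin> P" and b: "b \<in> W" "b \<notin> P"
  shows "reach W E a b"
proof -
  let ?c = "\<lambda>v. {w \<in> W. reach W E v w}"
  have ca: "?c a \<in> components W E" and cb: "?c b \<in> components W E" using a b by (auto simp: components_def)
  have "a \<in> ?c a" "b \<in> ?c b" using a b reach_refl by auto
  then have nP: "?c a \<noteq> P" "?c b \<noteq> P" using a b by auto
  obtain p q where pq: "components W E = {p, q}" "p \<noteq> q" using k unfolding kappa_def by (meson card_2_iff)
  have "?c a = ?c b" using ca cb nP P pq by auto
  then have "b \<in> ?c a" using \<open>b \<in> ?c b\<close> by simp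
  then show ?thesis by simp
qed

context zf begin

definition Bs :: "'a set set" where "Bs = {B. block V E B \<and> \<not> pendant_cut_edge V E B}"
definition nn :: "'a \<Rightarrow> nat" where "nn x = card {B \<in> Bs. x \<in> D B}"
definition blocksx :: "'a \<Rightarrow> 'a set set" where "blocksx x = {B. block V E B \<and> x \<in> B}"

lemma mu_eq: "mu V E x = card (blocksx x)" by (simp add: mu_def blocksx_def)

lemma fin_blocksx: "finite (blocksx x)" unfolding blocksx_def by (rule finite_blocksP)

lemma fin_Bs: "finite Bs" unfolding Bs_def by (rule finite_blocksP)

lemma nn_sub: "{B \<in> Bs. x \<in> D B} \<subseteq> blocksx x"
  using D_sub by (auto simp: Bs_def blocksx_def)

lemma nn_mu: "nn x \<le> card (blocksx x)"
  unfolding nn_def using nn_sub fin_blocksx by (rule card_mono[rotated])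

lemma mu_pos: "x \<in> V \<Longrightarrow> card (blocksx x) \<ge> 1"
proof -
  assume "x \<in> V"
  then obtain B where "block V E B" "{x} \<subseteq> B" using exists_block[OF nonsep_single] by blast
  then have "B \<in> blocksx x" by (simp add: blocksx_def)
  then show ?thesis using fin_blocksx by (metis One_nat_def Suc_leI card_gt_0_iff empty_iff)
qed

lemma B0:
  assumes "x \<in> V" "x \<notin> S"
  shows "\<exists>B0 u. block V E B0 \<and> x \<in> B0 \<and> u \<in> B0 \<and> adj E u x \<and> rank u < rank x \<and> x \<notin> D B0"
proof -
  obtain u where u: "u \<in> V" "adj E u x" "rank u < rank x" "\<forall>z\<in>V. adj E u z \<and> z \<noteq> x \<longrightarrow> rank z < rank x"
    using forcer[OF assms] by blast
  obtain B0 where B0: "block V E B0" "{u, x} \<subseteq> B0" using exists_block[OF nonsep_edge[OF u(2)]] by blast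
  have "IF B0 x" unfolding IF_def using u B0 by blast
  then have "x \<notin> D B0" using assms by (simp add: D_def)
  then show ?thesis using B0 u by blast
qed

lemma nn_mu1:
  assumes "x \<in> V" "x \<notin> S"
  shows "nn x + 1 \<le> card (blocksx x)"
proof -
  obtain B0 where B0: "block V E B0" "x \<in> B0" "x \<notin> D B0" using B0[OF assms] by blast
  have "{B \<in> Bs. x \<in> D B} \<subseteq> blocksx x - {B0}" using nn_sub B0(3) by blast
  then have "nn x \<le> card (blocksx x - {B0})" unfolding nn_def using fin_blocksx by (intro card_mono) auto
  moreover have "B0 \<in> blocksx x" using B0 by (simp add: blocksx_def)
  then have "Suc (card (blocksx x - {B0})) = card (blocksx x)" by (rule card_Suc_Diff1[OF fin_blocksx])
  ultimately show ?thesis by simp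
qed

lemma has_nbr:
  assumes "x \<in> V" "y \<in> V" "y \<noteq> x"
  shows "\<exists>t. adj E x t"
proof -
  have "reach V E x y" using connV(1) assms by (simp add: conn_def)
  then show ?thesis using reach_first assms(3) by metis
qed

lemma kap_eq: "kappa (V - {x}) (del_edges E x) = kappa (V - {x}) E"
  by (rule kappa_cong[OF reach_del])

lemma case1:
  assumes x: "x \<in> V" and k: "kappa (V - {x}) E \<le> 1"
  shows "card (blocksx x) \<le> 1"
proof -
  have finW: "finite (V - {x})" using finV by simp
  have eq: "B1 = B2" if B1: "block V E B1" "x \<in> B1" and B2: "block V E B2" "x \<in> B2" for B1 B2
  proof (cases "B1 \<subseteq> {x}")
    case True
    then have "B1 \<subseteq> B2" using B2 by blast
    then show ?thesis using block_max[OF B1(1) block_nonsep[OF B2(1)]] by simp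
  next
    case False
    then obtain a where a: "a \<in> B1" "a \<noteq> x" by blast
    show ?thesis
    proof (cases "B2 \<subseteq> {x}")
      case True
      then have "B2 \<subseteq> B1" using B1 by blast
      then show ?thesis using block_max[OF B2(1) block_nonsep[OF B1(1)]] by simp
    next
      case False
      then obtain b where b: "b \<in> B2" "b \<noteq> x" by blast
      have "a \<in> V - {x}" "b \<in> V - {x}" using a b blockV[OF B1(1)] blockV[OF B2(1)] by auto
      then have "reach (V - {x}) E a b" using kappa_le1_reach[OF finW k] by blast
      then show ?thesis using KL[OF B1(1) B2(1) B1(2) B2(2) a b] by simp
    qed
  qed
  show ?thesis unfolding card_le_Suc0_iff_eq[OF fin_blocksx] One_nat_def
    using eq by (auto simp: blocksx_def)
qed

lemma rank_P:
  assumes pp: "pendant_path V E x P" and SP: "S \<inter> P = {}" and y: "y \<in> P"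
  shows "rank x < rank y"
  using y
proof (induction "rank y" arbitrary: y rule: less_induct)
  case less
  have PV: "P \<subseteq> V - {x}" using pendant_sub[OF pp] .
  have yV: "y \<in> V" "y \<notin> S" using less.prems PV SP by auto
  obtain u where u: "u \<in> V" "adj E u y" "rank u < rank y" using forcer[OF yV] by blast
  show ?case
  proof (cases "u = x")
    case True then show ?thesis using u by simp
  next
    case False
    have Peq: "P = {w \<in> V - {x}. reach (V - {x}) E y w}" using pendant_comp[OF pp less.prems] .
    have yu: "adj E y u" using u(2) unfolding adj_def by (auto simp: insert_commute)
    have "y \<in> V - {x}" using PV less.prems by blast
    moreover have "u \<in> V - {x}" using u(1) False by blast
    ultimately have "reach (V - {x}) E y u" using yu by (rule reach_edge)
    then have "u \<in> {w \<in> V - {x}. reach (V - {x}) E y w}" using u(1) False by simp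
    then have "u \<in> P" using Peq by simp
    then have "rank x < rank u" using less.hyps u(3) by blast
    then show ?thesis using u(3) by simp
  qed
qed

end



context zf begin

lemma adj_swap: "adj E a b \<Longrightarrow> adj E b a" unfolding adj_def by (auto simp: insert_commute)

lemma pendant_xV: "pendant_path V E x P \<Longrightarrow> x \<in> V" by (simp add: pendant_path_def)

lemma zero_P:
  assumes pp: "pendant_path V E x P" and z: "z \<in> P"
  shows "nn z = 0"
proof -
  have zV: "z \<in> V" "z \<noteq> x" using pendant_sub[OF pp] z by auto
  have "{B \<in> Bs. z \<in> D B} = {}"
  proof (rule ccontr)
    assume "{B \<in> Bs. z \<in> D B} \<noteq> {}"
    then obtain B where B: "B \<in> Bs" "z \<in> D B" by blast
    have bl: "block V E B" and npc: "\<not> pendant_cut_edge V E B" using B(1) by (auto simp: Bs_def)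
    have zB: "z \<in> B" using B(2) D_sub by blast
    obtain t where "adj E z t" using has_nbr[OF zV(1) pendant_xV[OF pp] zV(2)[symmetric]] by blast
    then obtain b where "b \<in> B" "b \<noteq> z" using block_nontriv[OF bl zB] by blast
    then have "card B \<ge> 2" using card_ge2 zB blockV[OF bl] finV finite_subset by metis
    then have "pendant_cut_edge V E B" using pendant_block[OF pp block_nonsep[OF bl] zB z] by simp
    then show False using npc by simp
  qed
  then show ?thesis unfolding nn_def by (metis card.empty)
qed

lemma case3:
  assumes x: "x \<in> V" and k: "kappa (V - {x}) E = 2" and pp: "pendant_path V E x P"
  shows "nn x \<le> 1" and "x \<notin> S \<Longrightarrow> nn x \<ge> 1 \<Longrightarrow> S \<subseteq> P"
proof -
  have Pc: "P \<in> components (V - {x}) E"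
    using pp comps_cong[OF reach_del, of V x E] by (simp add: pendant_path_def)
  have finW: "finite (V - {x})" using finV by simp
  obtain x1 where x1: "x1 \<in> P" "adj E x x1" using pendant_nbr[OF pp] by blast
  have outP: "\<exists>a\<in>B. a \<noteq> x \<and> a \<notin> P \<and> a \<in> V - {x}"
    if B: "block V E B" "x \<in> B" "\<not> pendant_cut_edge V E B" for B
  proof -
    obtain a where a: "a \<in> B" "a \<noteq> x" using block_nontriv[OF B(1,2) x1(2)] by blast
    have finB: "finite B" using blockV[OF B(1)] finV finite_subset by blast
    have c2: "card B \<ge> 2" by (rule card_ge2[OF finB B(2) a(1) a(2)])
    have "a \<notin> P"
    proof
      assume "a \<in> P"
      then have "pendant_cut_edge V E B" using pendant_block[OF pp block_nonsep[OF B(1)] a(1) _ c2] by simp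
      then show False using B(3) by simp
    qed
    moreover have "a \<in> V - {x}" using a blockV[OF B(1)] by blast
    ultimately show ?thesis using a by blast
  qed
  have same: "B1 = B2" if B1: "block V E B1" "x \<in> B1" "\<not> pendant_cut_edge V E B1"
    and B2: "block V E B2" "x \<in> B2" and b: "b \<in> B2" "b \<noteq> x" "b \<in> V - {x}" "b \<notin> P" for B1 B2 b
  proof -
    obtain a where a: "a \<in> B1" "a \<noteq> x" "a \<notin> P" "a \<in> V - {x}" using outP[OF B1] by blast
    have "reach (V - {x}) E a b" using kappa2_reach[OF finW k Pc a(4) a(3) b(3) b(4)] .
    then show ?thesis using KL[OF B1(1) B2(1) B1(2) B2(2) a(1,2) b(1,2)] by simp
  qed
  show "nn x \<le> 1"
  proof -
    have eq: "\<forall>B1\<in>{B \<in> Bs. x \<in> D B}. \<forall>B2\<in>{B \<in> Bs. x \<in> D B}. B1 = B2"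
    proof (intro ballI)
      fix B1 B2 assume that: "B1 \<in> {B \<in> Bs. x \<in> D B}" "B2 \<in> {B \<in> Bs. x \<in> D B}"
      have B1: "block V E B1" "x \<in> B1" "\<not> pendant_cut_edge V E B1"
        and B2: "block V E B2" "x \<in> B2" "\<not> pendant_cut_edge V E B2"
        using that D_sub unfolding Bs_def by blast+
      obtain b where b: "b \<in> B2" "b \<noteq> x" "b \<notin> P" "b \<in> V - {x}" using outP[OF B2] by blast
      show "B1 = B2" using same[OF B1 B2(1,2) b(1,2,4,3)] .
    qed
    have "finite {B \<in> Bs. x \<in> D B}" using fin_Bs by simp
    then have "card {B \<in> Bs. x \<in> D B} \<le> Suc 0" using card_le_Suc0_iff_eq eq by blast
    then show ?thesis unfolding nn_def by simp
  qed
  assume xS: "x \<notin> S" and n1: "nn x \<ge> 1"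
  then have "card {B \<in> Bs. x \<in> D B} \<noteq> 0" by (simp add: nn_def)
  then have "{B \<in> Bs. x \<in> D B} \<noteq> {}" by (metis card.empty)
  then obtain B1 where B1: "B1 \<in> Bs" "x \<in> D B1" by blast
  have B1': "block V E B1" "x \<in> B1" "\<not> pendant_cut_edge V E B1" using B1 D_sub by (auto simp: Bs_def)
  obtain B0 u where B0: "block V E B0" "x \<in> B0" "u \<in> B0" "adj E u x" "rank u < rank x" "x \<notin> D B0"
    using B0[OF x xS] by blast
  have ne: "B0 \<noteq> B1" using B0(6) B1(2) by blast
  have uP: "u \<in> P"
  proof (rule ccontr)
    assume "u \<notin> P"
    moreover have "u \<noteq> x" using B0(4) by (auto simp: adj_def)
    moreover have "u \<in> V" using adjV[OF B0(4)] by blast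
    ultimately have "u \<in> V - {x}" "u \<notin> P" "u \<noteq> x" by auto
    then have "B1 = B0" using same[OF B1' B0(1,2,3)] by simp
    then show False using ne by simp
  qed
  have "S \<inter> P \<noteq> {}"
  proof
    assume "S \<inter> P = {}"
    then have "rank x < rank u" using rank_P[OF pp _ uP] by blast
    then show False using B0(5) by simp
  qed
  then obtain s0 where s0: "s0 \<in> S" "s0 \<in> P" by blast
  have Peq: "P = {w \<in> V - {x}. reach (V - {x}) E s0 w}" using pendant_comp[OF pp s0(2)] .
  have SW: "S \<subseteq> V - {x}" using SV xS by blast
  show "S \<subseteq> P"
  proof
    fix s assume s: "s \<in> S"
    have "reach S (ind E S) s0 s" using connS s0(1) s by (simp add: connected_graph_def)
    then have "reach S E s0 s" by (simp add: reach_ind)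
    then have "reach (V - {x}) E s0 s" using SW by (rule reach_mono)
    then have "s \<in> {w \<in> V - {x}. reach (V - {x}) E s0 w}" using SW s by blast
    then show "s \<in> P" using Peq by simp
  qed
qed

lemma unique:
  assumes pp: "pendant_path V E x P" and pp': "pendant_path V E x' P'"
    and SP: "S \<subseteq> P" and SP': "S \<subseteq> P'" and n: "nn x \<ge> 1" and n': "nn x' \<ge> 1"
  shows "x = x'"
proof (rule ccontr)
  assume xx: "x \<noteq> x'"
  have "x' \<notin> P"
  proof
    assume "x' \<in> P"
    then have "nn x' = 0" by (rule zero_P[OF pp])
    then show False using n' by simp
  qed
  have "S \<noteq> {}" using connS by (simp add: connected_graph_def)
  then obtain s where s: "s \<in> S" by blast
  obtain x1 where x1: "x1 \<in> P" "adj E x x1" using pendant_nbr[OF pp] by blast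
  have sP: "s \<in> P" using s SP by blast
  have Peq: "P = {w \<in> V - {x}. reach (V - {x}) E s w}" by (rule pendant_comp[OF pp sP])
  have "x1 \<in> {w \<in> V - {x}. reach (V - {x}) E s w}" using x1(1) Peq by simp
  then have r1: "reach (V - {x}) E s x1" by simp
  have sV: "s \<in> V - {x}" using sP pendant_sub[OF pp] by blast
  have "reach {w \<in> V - {x}. reach (V - {x}) E s w} E s x1" by (rule reach_within[OF r1 sV])
  then have "reach P E s x1" using Peq by simp
  moreover have "P \<subseteq> V - {x'}" using pendant_sub[OF pp] \<open>x' \<notin> P\<close> by blast
  ultimately have r2: "reach (V - {x'}) E s x1" by (rule reach_mono)
  have x1V: "x1 \<in> V - {x'}" using x1(1) pendant_sub[OF pp] \<open>x' \<notin> P\<close> by blast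
  have xV: "x \<in> V - {x'}" using pendant_xV[OF pp] xx by blast
  have "reach (V - {x'}) E s x" using reach_step[OF r2 x1V xV adj_swap[OF x1(2)]] .
  then have "x \<in> {w \<in> V - {x'}. reach (V - {x'}) E s w}" using xV by blast
  moreover have sP': "s \<in> P'" using s SP' by blast
  have "P' = {w \<in> V - {x'}. reach (V - {x'}) E s w}" by (rule pendant_comp[OF pp' sP'])
  ultimately have "x \<in> P'" by simp
  then have "nn x = 0" by (rule zero_P[OF pp'])
  then show False using n by simp
qed

end



context zf begin

definition R :: "'a set" where
  "R = {v \<in> V. kappa (V - {v}) (del_edges E v) = 2 \<and> num_pendant_paths V E v = 0}
     \<union> {v \<in> V. kappa (V - {v}) (del_edges E v) \<ge> 3}"

definition f :: "'a \<Rightarrow> int" where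
  "f x = (if x \<in> S then 1 else 0) + (if x \<in> R then int (mu V E x) - 1 else 0)"

definition Bad :: "'a set" where
  "Bad = {x \<in> V. x \<notin> S \<and> nn x \<ge> 1 \<and> (\<exists>P. pendant_path V E x P \<and> S \<subseteq> P)}"

lemma f_nonneg: "x \<in> V \<Longrightarrow> f x \<ge> 0"
  using mu_pos[of x] by (simp add: f_def mu_eq)

lemma f_S: "x \<in> S \<Longrightarrow> f x \<ge> 1"
  using mu_pos[of x] SV by (auto simp: f_def mu_eq)

lemma pervertex:
  assumes x: "x \<in> V"
  shows "int (nn x) \<le> f x + (if x \<in> Bad then 1 else 0)"
proof -
  have k: "kappa (V - {x}) (del_edges E x) = kappa (V - {x}) E" by (rule kap_eq)
  have mp: "card (blocksx x) \<ge> 1" using mu_pos[OF x] .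
  show ?thesis
  proof (cases "x \<in> R")
    case True
    show ?thesis
    proof (cases "x \<in> S")
      case True
      then show ?thesis using nn_mu[of x] \<open>x \<in> R\<close> by (simp add: f_def mu_eq)
    next
      case False
      then show ?thesis using nn_mu1[OF x False] \<open>x \<in> R\<close> by (simp add: f_def mu_eq)
    qed
  next
    case notR: False
    show ?thesis
    proof (cases "kappa (V - {x}) E \<le> 1")
      case True
      have c1: "card (blocksx x) \<le> 1" by (rule case1[OF x True])
      show ?thesis
      proof (cases "x \<in> S")
        case True
        then show ?thesis using nn_mu[of x] c1 notR by (simp add: f_def)
      next
        case False
        then show ?thesis using nn_mu1[OF x False] c1 notR by (simp add: f_def)
      qed
    next
      case False
      then have k2: "kappa (V - {x}) E = 2" and np: "num_pendant_paths V E x \<noteq> 0"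
        using notR x k by (auto simp: R_def)
      then have "{P. pendant_path V E x P} \<noteq> {}" unfolding num_pendant_paths_def by (metis card.empty)
      then obtain P where pp: "pendant_path V E x P" by blast
      have n1: "nn x \<le> 1" by (rule case3(1)[OF x k2 pp])
      show ?thesis
      proof (cases "x \<in> S")
        case True
        then show ?thesis using n1 notR by (simp add: f_def)
      next
        case xS: False
        show ?thesis
        proof (cases "nn x \<ge> 1")
          case True
          then have "S \<subseteq> P" using case3(2)[OF x k2 pp xS] by blast
          then have "x \<in> Bad" using x xS True pp by (auto simp: Bad_def)
          then show ?thesis using n1 notR xS by (simp add: f_def)
        next
          case False
          then have "nn x = 0" by simp
          then show ?thesis using f_nonneg[OF x] by simp
        qed
      qed
    qed
  qed
qed

lemma Bad_card: "card Bad \<le> 1"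
proof -
  have fin: "finite Bad" using finV by (simp add: Bad_def)
  have "\<forall>a\<in>Bad. \<forall>b\<in>Bad. a = b"
  proof (intro ballI)
    fix a b assume "a \<in> Bad" "b \<in> Bad"
    then obtain P Q where "pendant_path V E a P" "S \<subseteq> P" "nn a \<ge> 1"
      "pendant_path V E b Q" "S \<subseteq> Q" "nn b \<ge> 1" by (auto simp: Bad_def)
    then show "a = b" using unique by blast
  qed
  then show ?thesis using card_le_Suc0_iff_eq[OF fin] by simp
qed

lemma Bad_S: "b \<in> Bad \<Longrightarrow> s \<in> S \<Longrightarrow> nn s = 0"
proof -
  assume "b \<in> Bad" "s \<in> S"
  then obtain P where "pendant_path V E b P" "S \<subseteq> P" by (auto simp: Bad_def)
  then show "nn s = 0" using zero_P \<open>s \<in> S\<close> by blast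
qed

lemma sum_nn: "(\<Sum>x\<in>V. int (nn x)) \<le> (\<Sum>x\<in>V. f x)"
proof (cases "Bad = {}")
  case True
  then show ?thesis using pervertex by (intro sum_mono) simp
next
  case False
  then obtain b where b: "b \<in> Bad" by blast
  have BadV: "Bad \<subseteq> V - S" by (auto simp: Bad_def)
  have cb: "card Bad = 1" using Bad_card b finV BadV
    by (metis One_nat_def card_gt_0_iff empty_iff finite_Diff finite_subset le_antisym less_eq_Suc_le)
  have finVS: "finite (V - S)" using finV by simp
  have "(\<Sum>x\<in>V. int (nn x)) = (\<Sum>x\<in>V - S. int (nn x)) + (\<Sum>x\<in>S. int (nn x))"
    using finV SV by (metis sum.subset_diff)
  also have "(\<Sum>x\<in>S. int (nn x)) = 0" using Bad_S[OF b] by simp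
  also have "(\<Sum>x\<in>V - S. int (nn x)) \<le> (\<Sum>x\<in>V - S. f x + (if x \<in> Bad then 1 else 0))"
    using pervertex by (intro sum_mono) simp
  also have "\<dots> = (\<Sum>x\<in>V - S. f x) + (\<Sum>x\<in>V - S. if x \<in> Bad then 1 else 0)"
    by (simp add: sum.distrib)
  also have "(\<Sum>x\<in>V - S. if x \<in> Bad then 1 else (0::int)) = (\<Sum>x\<in>{x \<in> V - S. x \<in> Bad}. 1)"
    using finVS by (rule sum.inter_filter[symmetric])
  also have "{x \<in> V - S. x \<in> Bad} = Bad" using BadV by blast
  also have "(\<Sum>x\<in>Bad. (1::int)) = 1" using cb by simp
  also have "(1::int) \<le> (\<Sum>x\<in>S. f x)"
  proof -
    have "S \<noteq> {}" using connS by (simp add: connected_graph_def)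
    then obtain s where s: "s \<in> S" by blast
    have finS: "finite S" using SV finV finite_subset by blast
    have "f s \<le> (\<Sum>x\<in>S. f x)" using finS s f_nonneg SV by (intro member_le_sum) auto
    then show ?thesis using f_S[OF s] by simp
  qed
  then have "(\<Sum>x\<in>V - S. f x) + 1 \<le> (\<Sum>x\<in>V - S. f x) + (\<Sum>x\<in>S. f x)" by simp
  also have "\<dots> = (\<Sum>x\<in>V. f x)" using finV SV by (metis sum.subset_diff)
  finally show ?thesis by simp
qed

lemma sum_f: "(\<Sum>x\<in>V. f x) = int (card S) + (\<Sum>p\<in>R. int (mu V E p) - 1)"
proof -
  have RV: "R \<subseteq> V" by (auto simp: R_def)
  have "(\<Sum>x\<in>V. f x) = (\<Sum>x\<in>V. if x \<in> S then 1 else 0) + (\<Sum>x\<in>V. if x \<in> R then int (mu V E x) - 1 else 0)"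
    unfolding f_def by (simp add: sum.distrib)
  also have "(\<Sum>x\<in>V. if x \<in> S then 1 else (0::int)) = (\<Sum>x\<in>{x \<in> V. x \<in> S}. 1)"
    using finV by (rule sum.inter_filter[symmetric])
  also have "{x \<in> V. x \<in> S} = S" using SV by blast
  also have "(\<Sum>x\<in>V. if x \<in> R then int (mu V E x) - 1 else 0) = (\<Sum>x\<in>{x \<in> V. x \<in> R}. int (mu V E x) - 1)"
    using finV by (rule sum.inter_filter[symmetric])
  also have "{x \<in> V. x \<in> R} = R" using RV by blast
  finally show ?thesis by simp
qed

lemma main:
  "(\<Sum>B\<in>Bs. int (min_degree B (ind E B))) \<le> int (card S) + (\<Sum>p\<in>R. int (mu V E p) - 1)"
proof -
  have "(\<Sum>B\<in>Bs. int (min_degree B (ind E B))) \<le> (\<Sum>B\<in>Bs. int (card (D B)))"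
    using delta_le by (intro sum_mono) (auto simp: Bs_def)
  also have "\<dots> = int (\<Sum>B\<in>Bs. card (D B))" by simp
  also have "(\<Sum>B\<in>Bs. card (D B)) = (\<Sum>x\<in>V. card {B \<in> Bs. x \<in> D B})"
    using fin_Bs by (rule double_count) (auto simp: Bs_def dest: blockV)
  also have "int \<dots> = (\<Sum>x\<in>V. int (nn x))" by (simp add: nn_def)
  also have "\<dots> \<le> (\<Sum>x\<in>V. f x)" by (rule sum_nn)
  also have "\<dots> = int (card S) + (\<Sum>p\<in>R. int (mu V E p) - 1)" by (rule sum_f)
  finally show ?thesis .
qed

end


lemma forced_V: "simple_graph V E \<Longrightarrow> forced V E V = V"
proof
  assume sg: "simple_graph V E"
  show "forced V E V \<subseteq> V"
  proof
    fix x assume "x \<in> forced V E V"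
    then show "x \<in> V" by (induction rule: forced.induct) auto
  qed
  show "V \<subseteq> forced V E V" by (auto intro: forced.init)
qed

theorem corollary1:
  fixes V :: "'a set" and E :: "'a set set"
  assumes "simple_graph V E" and "connected_graph V E"
  defines "\<B> \<equiv> {B. block V E B \<and> \<not> pendant_cut_edge V E B}"
      and "R2 \<equiv> {v \<in> V. kappa (V - {v}) (del_edges E v) = 2 \<and> num_pendant_paths V E v = 0}"
      and "R3 \<equiv> {v \<in> V. kappa (V - {v}) (del_edges E v) \<ge> 3}"
  shows "int (Zc V E) \<ge> (\<Sum>B\<in>\<B>. int (min_degree B (ind E B)))
                         - (\<Sum>p\<in>R2 \<union> R3. int (mu V E p) - 1)"
proof -
  interpret graph V E using assms(1,2) by unfold_locales
  let ?P = "\<lambda>k. \<exists>S. zero_forcing_set V E S \<and> connected_graph S (ind E S) \<and> card S = k"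
  have "zero_forcing_set V E V" using forced_V[OF assms(1)] by (simp add: zero_forcing_set_def)
  moreover have "connected_graph V (ind E V)"
    using assms(2) by (simp add: connected_graph_def reach_ind)
  ultimately have "?P (card V)" by blast
  then have "?P (Zc V E)" unfolding Zc_def by (rule LeastI)
  then obtain S where S: "zero_forcing_set V E S" "connected_graph S (ind E S)" "card S = Zc V E" by blast
  interpret zf V E S using S(1,2) by unfold_locales
  have "\<B> = Bs" by (simp add: \<B>_def Bs_def)
  moreover have "R2 \<union> R3 = R" by (simp add: R2_def R3_def R_def)
  ultimately show ?thesis using main S(3) by simp
qed

end
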